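(* Let $n\ge 2$, $N=\{1,\dots,n\}$, for each $i\in N$ let $A_i$ be a nonempty finite set, $A=\prod_{i\in N}A_i$, $u_i:A\to\mathbb{R}$, and fix $\lambda\in\mathbb{R}^n\setminus\{\mathbf 0\}$. For every $\Delta\in(0,1)$ and every $a^{[n]}\in\mathcal{A}^*_\lambda(\Delta)$, $$\frac{\partial W_\lambda}{\partial\Delta}(a^{[n]},\Delta)\le 0,$$ where the derivative is taken with respect to the second argument with $a^{[n]}$ held fixed.
   Context: For $a^{[n]}=(a^1,\dots,a^n)\in A^n$ extend indices by $a^s=a^{s-n}$ for $s\ge n+1$, and for $\Delta\in(0,1]$ define $$v_i^\Delta(a^{[n]})=\frac{\sum_{k=1}^n\Delta^{k-1}u_i(a^{i+k-1})}{\sum_{k=1}^n\Delta^{k-1}},\qquad W_\lambda(a^{[n]},\Delta)=\sum_{i=1}^n\lambda_i v_i^\Delta(a^{[n]}).$$ Let $\mathcal{A}^*_\lambda(\Delta)\subseteq A^n$ be the set of maximizers of $a^{[n]}\mapsto W_\lambda(a^{[n]},\Delta)$ over $A^n$. *)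

theory Defs
  imports "HOL-Analysis.Analysis"
begin

text \<open>Players are indexed 0..n-1 (paper: 1..n).
  A sequence a^[n] of n profiles is a function nat => profile, indices 0..n-1,
  extended cyclically via mod n.\<close>

definition profiles :: "nat \<Rightarrow> (nat \<Rightarrow> 'b set) \<Rightarrow> (nat \<Rightarrow> 'b) set" where
  "profiles n As = PiE {..<n} As"

definition seqs :: "nat \<Rightarrow> (nat \<Rightarrow> 'b set) \<Rightarrow> (nat \<Rightarrow> (nat \<Rightarrow> 'b)) set" where
  "seqs n As = PiE {..<n} (\<lambda>_. profiles n As)"

text \<open>v_i^Delta(a^[n]); with 0-based i,k the paper's a^{i+k-1} is a ((i+k) mod n).\<close>
definition vval :: "nat \<Rightarrow> (nat \<Rightarrow> (nat \<Rightarrow> 'b) \<Rightarrow> real) \<Rightarrow> (nat \<Rightarrow> (nat \<Rightarrow> 'b)) \<Rightarrow> real \<Rightarrow> nat \<Rightarrow> real" where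
  "vval n u a \<Delta> i = (\<Sum>k<n. \<Delta> ^ k * u i (a ((i + k) mod n))) / (\<Sum>k<n. \<Delta> ^ k)"

definition Wlam :: "nat \<Rightarrow> (nat \<Rightarrow> (nat \<Rightarrow> 'b) \<Rightarrow> real) \<Rightarrow> (nat \<Rightarrow> real) \<Rightarrow> (nat \<Rightarrow> (nat \<Rightarrow> 'b)) \<Rightarrow> real \<Rightarrow> real" where
  "Wlam n u lam a \<Delta> = (\<Sum>i<n. lam i * vval n u a \<Delta> i)"

definition maximizers :: "nat \<Rightarrow> (nat \<Rightarrow> 'b set) \<Rightarrow> (nat \<Rightarrow> (nat \<Rightarrow> 'b) \<Rightarrow> real) \<Rightarrow> (nat \<Rightarrow> real) \<Rightarrow> real \<Rightarrow> (nat \<Rightarrow> (nat \<Rightarrow> 'b)) set" where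
  "maximizers n As u lam \<Delta> =
     {a \<in> seqs n As. \<forall>b \<in> seqs n As. Wlam n u lam b \<Delta> \<le> Wlam n u lam a \<Delta>}"

end

theory Submission
  imports Defs
begin

definition ccf :: "nat \<Rightarrow> (nat \<Rightarrow> (nat \<Rightarrow> 'b) \<Rightarrow> real) \<Rightarrow> (nat \<Rightarrow> real) \<Rightarrow> (nat \<Rightarrow> (nat \<Rightarrow> 'b)) \<Rightarrow> nat \<Rightarrow> real" where
  "ccf n u lam x k = (\<Sum>i<n. lam i * u i (x ((i + k) mod n)))"

lemma Wform: "Wlam n u lam x d = (\<Sum>k<n. d ^ k * ccf n u lam x k) / (\<Sum>k<n. d ^ k)"
proof -
  have "Wlam n u lam x d = (\<Sum>i<n. lam i * (\<Sum>k<n. d ^ k * u i (x ((i + k) mod n)))) / (\<Sum>k<n. d ^ k)"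
    unfolding Wlam_def vval_def times_divide_eq_right sum_divide_distrib[symmetric] by (rule refl)
  also have "(\<Sum>i<n. lam i * (\<Sum>k<n. d ^ k * u i (x ((i + k) mod n)))) = (\<Sum>k<n. d ^ k * ccf n u lam x k)"
    unfolding ccf_def sum_distrib_left
    by (subst sum.swap) (auto intro!: sum.cong simp: algebra_simps)
  finally show ?thesis .
qed

lemma shift_id:
  fixes c :: "nat \<Rightarrow> real" and D :: real
  assumes "m \<le> n"
  shows "D ^ m * (\<Sum>k<n. D ^ k * c ((k + m) mod n)) =
    (\<Sum>j<n. D ^ j * c j) - (\<Sum>j<m. D ^ j * c j) + D ^ n * (\<Sum>j<m. D ^ j * c j)"
proof -
  have "D ^ m * (\<Sum>k<n. D ^ k * c ((k + m) mod n)) = (\<Sum>k<n. D ^ (k + m) * c ((k + m) mod n))"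
    by (simp add: sum_distrib_left power_add algebra_simps)
  also have "\<dots> = (\<Sum>j\<in>{m..<n+m}. D ^ j * c (j mod n))"
  proof -
    have "{m..<n+m} = {0+m..<n+m}" by simp
    then show ?thesis
      apply (simp only:)
      apply (subst sum.shift_bounds_nat_ivl)
      apply (simp add: lessThan_atLeast0)
      done
  qed
  also have "\<dots> = (\<Sum>j\<in>{m..<n}. D ^ j * c (j mod n)) + (\<Sum>j\<in>{n..<n+m}. D ^ j * c (j mod n))"
    using assms by (intro sum.atLeastLessThan_concat[symmetric]) auto
  also have "(\<Sum>j\<in>{m..<n}. D ^ j * c (j mod n)) = (\<Sum>j\<in>{m..<n}. D ^ j * c j)"
    by (rule sum.cong) auto
  also have "(\<Sum>j\<in>{n..<n+m}. D ^ j * c (j mod n)) = (\<Sum>j\<in>{0..<m}. D ^ (j + n) * c ((j + n) mod n))"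
    using sum.shift_bounds_nat_ivl[of "\<lambda>j. D ^ j * c (j mod n)" 0 n m] by (simp add: add.commute)
  also have "\<dots> = D ^ n * (\<Sum>j<m. D ^ j * c j)"
    using assms by (auto simp: sum_distrib_left power_add lessThan_atLeast0 algebra_simps intro!: sum.cong)
  also have "(\<Sum>j\<in>{m..<n}. D ^ j * c j) = (\<Sum>j<n. D ^ j * c j) - (\<Sum>j<m. D ^ j * c j)"
    using assms by (simp add: sum_diff_nat_ivl lessThan_atLeast0)
  finally show ?thesis .
qed

lemma abel_id:
  fixes f :: "nat \<Rightarrow> real"
  shows "(\<Sum>k<n. real k * f k) = (\<Sum>m\<in>{1..<n}. (\<Sum>k<n. f k) - (\<Sum>k<m. f k))"
proof (induction n)
  case 0 then show ?case by simp
next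
  case (Suc n)
  show ?case
  proof (cases n)
    case 0 then show ?thesis by simp
  next
    case (Suc p)
    have "(\<Sum>m\<in>{1..<Suc n}. (\<Sum>k<Suc n. f k) - (\<Sum>k<m. f k))
       = (\<Sum>m\<in>{1..<n}. (\<Sum>k<Suc n. f k) - (\<Sum>k<m. f k)) + ((\<Sum>k<Suc n. f k) - (\<Sum>k<n. f k))"
      using Suc by simp
    also have "(\<Sum>m\<in>{1..<n}. (\<Sum>k<Suc n. f k) - (\<Sum>k<m. f k)) = (\<Sum>m\<in>{1..<n}. ((\<Sum>k<n. f k) - (\<Sum>k<m. f k)) + f n)"
      by (rule sum.cong) auto
    also have "\<dots> = (\<Sum>k<n. real k * f k) + real (n - 1) * f n"
      using Suc.IH by (simp add: sum.distrib)
    finally show ?thesis using Suc by (simp add: algebra_simps)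
  qed
qed



lemma key_ineq:
  fixes D :: real and V T Sn Sm :: real and m n :: nat
  assumes "0 < D" "D < 1"
    and "V - T + D ^ n * T \<le> D ^ m * V"
    and "1 - D ^ m = (1 - D) * Sm" and "1 - D ^ n = (1 - D) * Sn"
  shows "V * Sm \<le> T * Sn"
proof -
  have "(1 - D) * (V * Sm) \<le> (1 - D) * (T * Sn)"
  proof -
    have "(1 - D) * (V * Sm) = V * (1 - D ^ m)" unfolding assms(4) by (simp add: ac_simps)
    also have "\<dots> \<le> T * (1 - D ^ n)" using assms(3) by (simp add: algebra_simps)
    also have "\<dots> = (1 - D) * (T * Sn)" unfolding assms(5) by (simp add: ac_simps)
    finally show ?thesis .
  qed
  then show ?thesis using assms(2) by simp
qed

theorem lemma2:
  fixes n :: nat and As :: "nat \<Rightarrow> 'b set"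
    and u :: "nat \<Rightarrow> (nat \<Rightarrow> 'b) \<Rightarrow> real" and lam :: "nat \<Rightarrow> real"
    and \<Delta> :: real and a :: "nat \<Rightarrow> (nat \<Rightarrow> 'b)"
  assumes "n \<ge> 2"
    and "\<And>i. i < n \<Longrightarrow> finite (As i) \<and> As i \<noteq> {}"
    and "\<exists>i<n. lam i \<noteq> 0"
    and "0 < \<Delta>" and "\<Delta> < 1"
    and "a \<in> maximizers n As u lam \<Delta>"
  shows "deriv (\<lambda>d. Wlam n u lam a d) \<Delta> \<le> 0"
proof -
  have n0: "0 < n" using assms(1) by simp
  define c where "c = ccf n u lam a"
  define V where "V = (\<lambda>d::real. \<Sum>k<n. d ^ k * c k)"
  define S where "S = (\<lambda>d::real. \<Sum>k<n. d ^ k)"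
  define V' where "V' = (\<lambda>d::real. \<Sum>k<n. real k * d ^ (k - 1) * c k)"
  define S' where "S' = (\<lambda>d::real. \<Sum>k<n. real k * d ^ (k - 1))"
  define T where "T = (\<lambda>m. \<Sum>k<m. \<Delta> ^ k * c k)"
  define Sm where "Sm = (\<lambda>m. \<Sum>k<m. \<Delta> ^ (k::nat))"
  have Spos: "S \<Delta> > 0"
  proof -
    have "S \<Delta> = (\<Sum>k<n. \<Delta> ^ k)" by (simp add: S_def)
    also have "\<dots> \<ge> \<Delta> ^ 0" using n0 assms(4)
      by (intro member_le_sum) auto
    finally show ?thesis by simp
  qed
  have Wa: "\<And>d. Wlam n u lam a d = V d / S d"
    unfolding V_def S_def c_def by (rule Wform)
  have ineq: "V \<Delta> * Sm m \<le> T m * S \<Delta>" if m: "m \<le> n" for m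
  proof -
    define b where "b = (\<lambda>j. if j < n then a ((j + m) mod n) else undefined)"
    have aseq: "a \<in> seqs n As" and amax: "\<And>b. b \<in> seqs n As \<Longrightarrow> Wlam n u lam b \<Delta> \<le> Wlam n u lam a \<Delta>"
      using assms(6) unfolding maximizers_def by auto
    have bseq: "b \<in> seqs n As"
      using aseq n0 unfolding seqs_def b_def by (auto simp: PiE_def extensional_def)
    have cb: "ccf n u lam b k = c ((k + m) mod n)" for k
    proof -
      have "((i + k) mod n + m) mod n = (i + (k + m) mod n) mod n" for i
        by (metis add.assoc mod_add_left_eq mod_add_right_eq)
      then show ?thesis unfolding ccf_def c_def b_def using n0 by simp
    qed
    have "Wlam n u lam b \<Delta> \<le> Wlam n u lam a \<Delta>" using amax bseq .
    then have "(\<Sum>k<n. \<Delta> ^ k * c ((k + m) mod n)) / S \<Delta> \<le> V \<Delta> / S \<Delta>"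
      unfolding Wa Wform[of n u lam b] cb S_def by simp
    then have "(\<Sum>k<n. \<Delta> ^ k * c ((k + m) mod n)) \<le> V \<Delta>"
      using Spos by (simp add: divide_le_cancel)
    then have "\<Delta> ^ m * (\<Sum>k<n. \<Delta> ^ k * c ((k + m) mod n)) \<le> \<Delta> ^ m * V \<Delta>"
      using assms(4) by (simp add: mult_left_mono)
    then have "V \<Delta> - T m + \<Delta> ^ n * T m \<le> \<Delta> ^ m * V \<Delta>"
      unfolding shift_id[OF m] V_def T_def by simp
    then show ?thesis
      using key_ineq[of \<Delta> "V \<Delta>" "T m" n m "Sm m" "S \<Delta>"] assms(4,5)
      unfolding Sm_def S_def by (simp add: one_diff_power_eq)
  qed
  have dV: "(V has_real_derivative V' \<Delta>) (at \<Delta>)"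
    unfolding V_def V'_def
    by (auto intro!: derivative_eq_intros DERIV_sum simp: algebra_simps)
  have dS: "(S has_real_derivative S' \<Delta>) (at \<Delta>)"
    unfolding S_def S'_def
    by (auto intro!: derivative_eq_intros DERIV_sum simp: algebra_simps)
  have dW: "((\<lambda>d. Wlam n u lam a d) has_real_derivative
      (V' \<Delta> * S \<Delta> - V \<Delta> * S' \<Delta>) / (S \<Delta> * S \<Delta>)) (at \<Delta>)"
    unfolding Wa using DERIV_divide[OF dV dS] Spos by simp
  have e1: "\<Delta> * V' \<Delta> = (\<Sum>m\<in>{1..<n}. V \<Delta> - T m)"
  proof -
    have "\<Delta> * V' \<Delta> = (\<Sum>k<n. real k * (\<Delta> ^ k * c k))"
      unfolding V'_def sum_distrib_left
      by (rule sum.cong) (auto simp: power_eq_if)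
    also have "\<dots> = (\<Sum>m\<in>{1..<n}. V \<Delta> - T m)"
      unfolding abel_id V_def T_def ..
    finally show ?thesis .
  qed
  have e2: "\<Delta> * S' \<Delta> = (\<Sum>m\<in>{1..<n}. S \<Delta> - Sm m)"
  proof -
    have "\<Delta> * S' \<Delta> = (\<Sum>k<n. real k * (\<Delta> ^ k))"
      unfolding S'_def sum_distrib_left
      by (rule sum.cong) (auto simp: power_eq_if)
    also have "\<dots> = (\<Sum>m\<in>{1..<n}. S \<Delta> - Sm m)"
      unfolding abel_id S_def Sm_def ..
    finally show ?thesis .
  qed
  have "\<Delta> * (V' \<Delta> * S \<Delta> - V \<Delta> * S' \<Delta>) = (\<Delta> * V' \<Delta>) * S \<Delta> - V \<Delta> * (\<Delta> * S' \<Delta>)"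
    by (simp add: algebra_simps)
  also have "\<dots> = (\<Sum>m\<in>{1..<n}. V \<Delta> * Sm m - T m * S \<Delta>)"
    unfolding e1 e2 sum_distrib_left sum_distrib_right sum_subtractf[symmetric]
    by (rule sum.cong) (auto simp: algebra_simps)
  also have "\<dots> \<le> 0"
    by (rule sum_nonpos) (use ineq in auto)
  finally have "V' \<Delta> * S \<Delta> - V \<Delta> * S' \<Delta> \<le> 0"
    using assms(4) by (simp add: mult_le_0_iff)
  then have "(V' \<Delta> * S \<Delta> - V \<Delta> * S' \<Delta>) / (S \<Delta> * S \<Delta>) \<le> 0"
    by (simp add: divide_nonpos_nonneg)
  then show ?thesis using DERIV_imp_deriv[OF dW] by simp
qed

end
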